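(* Let $A=(V_\exists,V_\forall,E,E_f)$ be a fair game arena, $\alpha$ an $\omega$-regular winning condition over $V$, and $v\in V$. Then $$\exists s\in\Sigma^f.\,\forall t\in\Pi^f.\,\mathsf{play}_v(s,t)\in\alpha$$ holds if and only if $$\exists s\in\Sigma.\,\forall t\in\Pi.\,\mathsf{fair}_\exists(\mathsf{play}_v(s,t))\wedge\big(\mathsf{fair}_\forall(\mathsf{play}_v(s,t))\Rightarrow\mathsf{play}_v(s,t)\in\alpha\big)$$ holds.
   Context: A fair game arena $A=(V_\exists,V_\forall,E,E_f)$: finite node set $V=V_\exists\cup V_\forall$ (disjoint), right-total moves $E\subseteq V\times V$, fair moves $E_f\subseteq E$. A play is an infinite sequence $\tau=v_0v_1\ldots$ with $(v_j,v_{j+1})\in E$; $\tau_m$ is its sequence of moves; $\mathsf{Inf}$ denotes the set of elements occurring infinitely often. For $i\in\{\exists,\forall\}$, $\tau$ is $i$-fair ($\mathsf{fair}_i(\tau)$) if for all $u\in V_i\cap\mathsf{Inf}(\tau)$, every $(u,u')\in E_f$ is in $\mathsf{Inf}(\tau_m)$. A strategy for player $i$ is a function $p:V^*\cdot V_i\to V$ with $p(w\cdot u)\in E(u)$; $\Sigma$ ($\Pi$) is the set of strategies of $\exists$ ($\forall$); $\mathsf{play}_v(s,t)$ is the unique play from $v$ compliant with $s$ and $t$. A strategy is $i$-fair if every play it admits is $i$-fair; $\Sigma^f$, $\Pi^f$ are the sets of $\exists$-fair and $\forall$-fair strategies. An $\omega$-regular winning condition is an $\omega$-regular language $\alpha\subseteq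 V^\omega$. *)

theory Defs
  imports Main
begin

definition fair_arena :: "'v set \<Rightarrow> 'v set \<Rightarrow> ('v \<times> 'v) set \<Rightarrow> ('v \<times> 'v) set \<Rightarrow> bool" where
  "fair_arena Vex Vall E Ef \<longleftrightarrow>
     finite (Vex \<union> Vall) \<and> Vex \<inter> Vall = {} \<and>
     E \<subseteq> (Vex \<union> Vall) \<times> (Vex \<union> Vall) \<and>
     (\<forall>u \<in> Vex \<union> Vall. \<exists>u'. (u, u') \<in> E) \<and>
     Ef \<subseteq> E"

definition is_play :: "('v \<times> 'v) set \<Rightarrow> (nat \<Rightarrow> 'v) \<Rightarrow> bool" where
  "is_play E \<tau> \<longleftrightarrow> (\<forall>j. (\<tau> j, \<tau> (Suc j)) \<in> E)"

definition moves :: "(nat \<Rightarrow> 'v) \<Rightarrow> nat \<Rightarrow> 'v \<times> 'v" where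
  "moves \<tau> j = (\<tau> j, \<tau> (Suc j))"

definition Inf_set :: "(nat \<Rightarrow> 'a) \<Rightarrow> 'a set" where
  "Inf_set \<tau> = {x. \<exists>\<^sub>\<infinity>n. \<tau> n = x}"

(* fair_i(\<tau>) for the player owning the node set Vi *)
definition fair :: "'v set \<Rightarrow> ('v \<times> 'v) set \<Rightarrow> (nat \<Rightarrow> 'v) \<Rightarrow> bool" where
  "fair Vi Ef \<tau> \<longleftrightarrow>
     (\<forall>u \<in> Vi \<inter> Inf_set \<tau>. \<forall>u'. (u, u') \<in> Ef \<longrightarrow> (u, u') \<in> Inf_set (moves \<tau>))"

(* A strategy p : V^* . V_i \<rightarrow> V is represented as a function taking the history
   prefix w and the current node u; p w u is the successor chosen. *)
type_synonym 'v strategy = "'v list \<Rightarrow> 'v \<Rightarrow> 'v"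

definition strategies :: "'v set \<Rightarrow> ('v \<times> 'v) set \<Rightarrow> 'v strategy set" where
  "strategies Vi E = {p. \<forall>w u. u \<in> Vi \<longrightarrow> (u, p w u) \<in> E}"

definition prefix :: "(nat \<Rightarrow> 'v) \<Rightarrow> nat \<Rightarrow> 'v list" where
  "prefix \<tau> n = map \<tau> [0..<n]"

definition complies :: "'v set \<Rightarrow> 'v strategy \<Rightarrow> (nat \<Rightarrow> 'v) \<Rightarrow> bool" where
  "complies Vi p \<tau> \<longleftrightarrow> (\<forall>n. \<tau> n \<in> Vi \<longrightarrow> \<tau> (Suc n) = p (prefix \<tau> n) (\<tau> n))"

fun play_hist :: "'v set \<Rightarrow> 'v strategy \<Rightarrow> 'v strategy \<Rightarrow> 'v \<Rightarrow> nat \<Rightarrow> 'v list" where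
  "play_hist Vex s t v 0 = [v]"
| "play_hist Vex s t v (Suc n) =
     (let h = play_hist Vex s t v n; u = last h in
      h @ [if u \<in> Vex then s (butlast h) u else t (butlast h) u])"

definition play :: "'v set \<Rightarrow> 'v \<Rightarrow> 'v strategy \<Rightarrow> 'v strategy \<Rightarrow> nat \<Rightarrow> 'v" where
  "play Vex v s t n = last (play_hist Vex s t v n)"

definition fair_strategies :: "'v set \<Rightarrow> 'v set \<Rightarrow> ('v \<times> 'v) set \<Rightarrow> ('v \<times> 'v) set \<Rightarrow> 'v strategy set" where
  "fair_strategies V Vi E Ef =
     {p \<in> strategies Vi E. \<forall>\<tau>. is_play E \<tau> \<and> \<tau> 0 \<in> V \<and> complies Vi p \<tau> \<longrightarrow> fair Vi Ef \<tau>}"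

(* omega-regular languages: accepted by a nondeterministic Buechi automaton
   (finite state set, states encoded as natural numbers) *)
definition omega_regular :: "(nat \<Rightarrow> 'v) set \<Rightarrow> bool" where
  "omega_regular L \<longleftrightarrow>
     (\<exists>(Q::nat set) Q0 (\<delta>::nat \<Rightarrow> 'v \<Rightarrow> nat set) F.
        finite Q \<and> Q0 \<subseteq> Q \<and> F \<subseteq> Q \<and> (\<forall>q a. \<delta> q a \<subseteq> Q) \<and>
        L = {w. \<exists>r. r 0 \<in> Q0 \<and> (\<forall>n. r (Suc n) \<in> \<delta> (r n) (w n)) \<and> (\<exists>\<^sub>\<infinity>n. r n \<in> F)})"

end

theory Submission
  imports Defs "HOL-Library.Infinite_Set"
begin

definition succL :: "('v \<times> 'v) set \<Rightarrow> 'v \<Rightarrow> 'v list" where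
  "succL E u = (SOME L. set L = {u'. (u, u') \<in> E})"

definition rr :: "('v \<times> 'v) set \<Rightarrow> 'v list \<Rightarrow> 'v \<Rightarrow> 'v" where
  "rr E w u = succL E u ! (length (filter ((=) u) w) mod length (succL E u))"

definition patch :: "'v list set \<Rightarrow> 'v strategy \<Rightarrow> ('v \<times> 'v) set \<Rightarrow> 'v strategy" where
  "patch P p E w u = (if w @ [u] \<in> P then p w u else rr E w u)"

lemma prefix_Suc: "prefix \<tau> (Suc n) = prefix \<tau> n @ [\<tau> n]"
  by (simp add: prefix_def)

lemma prefix_len[simp]: "length (prefix \<tau> n) = n"
  by (simp add: prefix_def)

lemma prefix_nth: "j < n \<Longrightarrow> prefix \<tau> n ! j = \<tau> j"
  by (simp add: prefix_def)

lemma prefix_eqD: "prefix \<tau> n = prefix \<sigma> n \<Longrightarrow> j < n \<Longrightarrow> \<tau> j = \<sigma> j"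
  by (metis prefix_nth)

lemma prefix_cong: "(\<And>j. j < n \<Longrightarrow> \<tau> j = \<sigma> j) \<Longrightarrow> prefix \<tau> n = prefix \<sigma> n"
  by (simp add: prefix_def)

lemma arena_succ_finite:
  assumes "fair_arena Vex Vall E Ef"
  shows "finite {u'. (u, u') \<in> E}"
proof -
  have "{u'. (u, u') \<in> E} \<subseteq> Vex \<union> Vall" using assms unfolding fair_arena_def by auto
  then show ?thesis using assms unfolding fair_arena_def by (meson finite_subset)
qed

lemma succL_set:
  assumes "fair_arena Vex Vall E Ef"
  shows "set (succL E u) = {u'. (u, u') \<in> E}"
  unfolding succL_def using arena_succ_finite[OF assms] finite_list by (metis (mono_tags) someI_ex)

lemma succL_ne:
  assumes "fair_arena Vex Vall E Ef" "u \<in> Vex \<union> Vall"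
  shows "succL E u \<noteq> []"
proof -
  obtain u' where "(u, u') \<in> E" using assms unfolding fair_arena_def by blast
  then have "u' \<in> set (succL E u)" using succL_set[OF assms(1)] by auto
  then show ?thesis by auto
qed

lemma rr_in_E:
  assumes "fair_arena Vex Vall E Ef" "u \<in> Vex \<union> Vall"
  shows "(u, rr E w u) \<in> E"
proof -
  have "succL E u \<noteq> []" by (rule succL_ne[OF assms])
  then have "rr E w u \<in> set (succL E u)" unfolding rr_def by simp
  then show ?thesis using succL_set[OF assms(1)] by auto
qed

lemma rr_fair_tail:
  assumes arena: "fair_arena Vex Vall E Ef" and Vi: "Vi \<subseteq> Vex \<union> Vall"
    and tail: "\<forall>m\<ge>n0. \<tau> m \<in> Vi \<longrightarrow> \<tau> (Suc m) = rr E (prefix \<tau> m) (\<tau> m)"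
  shows "fair Vi Ef \<tau>"
  unfolding fair_def
proof (intro ballI allI impI)
  fix u u'
  assume uI: "u \<in> Vi \<inter> Inf_set \<tau>" and f: "(u, u') \<in> Ef"
  have uV: "u \<in> Vex \<union> Vall" using uI Vi by auto
  have "(u, u') \<in> E" using f arena unfolding fair_arena_def by auto
  then have "u' \<in> set (succL E u)" using succL_set[OF arena] by auto
  then obtain i where i: "i < length (succL E u)" "succL E u ! i = u'"
    by (metis in_set_conv_nth)
  define k where "k = length (succL E u)"
  have kpos: "k > 0" using i k_def by auto
  define c where "c m = length (filter ((=) u) (prefix \<tau> m))" for m
  have cS: "c (Suc m) = c m + (if \<tau> m = u then 1 else 0)" for m
    unfolding c_def by (simp add: prefix_Suc)
  have c0: "c 0 = 0" unfolding c_def by (simp add: prefix_def)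
  have cmono: "c a \<le> c b" if "a \<le> b" for a b
    using that by (induction rule: dec_induct) (auto simp: cS)
  have inf: "\<exists>\<^sub>\<infinity>n. \<tau> n = u" using uI unfolding Inf_set_def by auto
  then have infn: "\<forall>m. \<exists>n>m. \<tau> n = u" by (simp add: INFM_nat)
  have unb: "\<exists>m. c m > T" for T
  proof (induction T)
    case 0
    obtain j where "\<tau> j = u" using infn by blast
    then show ?case using cS[of j] by (intro exI[of _ "Suc j"]) simp
  next
    case (Suc T)
    then obtain m where m: "c m > T" by blast
    obtain j where j: "j > m" "\<tau> j = u" using infn by blast
    have "c m \<le> c j" using cmono j by simp
    then show ?case using cS[of j] j m by (intro exI[of _ "Suc j"]) simp
  qed
  have "\<forall>N. \<exists>m>N. moves \<tau> m = (u, u')"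
  proof
    fix N
    define N' where "N' = max (Suc N) n0"
    define T where "T = c N' * k + i"
    have TmodK: "T mod k = i" unfolding T_def using i k_def by simp
    have TgeC: "T \<ge> c N'" unfolding T_def using kpos
      by (simp add: trans_le_add1)
    define m' where "m' = (LEAST m. c m > T)"
    have m'1: "c m' > T" unfolding m'_def using unb by (metis LeastI_ex)
    have m'pos: "m' \<noteq> 0" using m'1 c0 by (metis not_less_zero)
    then obtain m where mm: "m' = Suc m" by (cases m') auto
    have cm: "c m \<le> T" using not_less_Least[of m "\<lambda>m. c m > T"] mm m'_def by simp
    have um: "\<tau> m = u" and cmT: "c m = T" using cm m'1 mm cS[of m]
      by (auto split: if_splits)
    have "m \<ge> N'"
    proof (rule ccontr)
      assume "\<not> N' \<le> m"
      then have "Suc m \<le> N'" by simp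
      then have "c (Suc m) \<le> c N'" by (rule cmono)
      then show False using m'1 mm TgeC by simp
    qed
    then have mN: "m > N" "m \<ge> n0" unfolding N'_def by auto
    have "\<tau> (Suc m) = rr E (prefix \<tau> m) u" using tail mN um uI by auto
    also have "\<dots> = u'" unfolding rr_def using cmT TmodK i
      by (simp add: c_def k_def)
    finally show "\<exists>m>N. moves \<tau> m = (u, u')" using mN um
      by (intro exI[of _ m]) (simp add: moves_def)
  qed
  then show "(u, u') \<in> Inf_set (moves \<tau>)"
    unfolding Inf_set_def by (simp add: INFM_nat)
qed

lemma patch_fair:
  assumes arena: "fair_arena Vex Vall E Ef" and Vi: "Vi \<subseteq> Vex \<union> Vall"
    and p: "p \<in> strategies Vi E"
    and closed: "\<forall>w u. w @ [u] \<in> P \<longrightarrow> w \<in> P"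
    and hyp: "\<forall>\<tau>. is_play E \<tau> \<and> \<tau> 0 \<in> Vex \<union> Vall \<and> complies Vi (patch P p E) \<tau>
                  \<and> (\<forall>n. prefix \<tau> n \<in> P) \<longrightarrow> fair Vi Ef \<tau>"
  shows "patch P p E \<in> fair_strategies (Vex \<union> Vall) Vi E Ef"
proof -
  have st: "patch P p E \<in> strategies Vi E"
    unfolding strategies_def patch_def using p Vi rr_in_E[OF arena]
    by (auto simp: strategies_def)
  have "fair Vi Ef \<tau>" if pl: "is_play E \<tau>" "\<tau> 0 \<in> Vex \<union> Vall" "complies Vi (patch P p E) \<tau>" for \<tau>
  proof (cases "\<forall>n. prefix \<tau> n \<in> P")
    case True
    then show ?thesis using hyp pl by blast
  next
    case False
    then obtain n0 where n0: "prefix \<tau> n0 \<notin> P" by blast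
    have out: "prefix \<tau> m \<notin> P" if "m \<ge> n0" for m
      using that
    proof (induction rule: dec_induct)
      case base then show ?case using n0 .
    next
      case (step m) then show ?case using closed by (metis prefix_Suc)
    qed
    have "\<forall>m\<ge>n0. \<tau> m \<in> Vi \<longrightarrow> \<tau> (Suc m) = rr E (prefix \<tau> m) (\<tau> m)"
    proof (intro allI impI)
      fix m assume "m \<ge> n0" "\<tau> m \<in> Vi"
      then have "\<tau> (Suc m) = patch P p E (prefix \<tau> m) (\<tau> m)" using pl(3)
        unfolding complies_def by blast
      also have "\<dots> = rr E (prefix \<tau> m) (\<tau> m)"
        unfolding patch_def using out[of "Suc m"] \<open>m \<ge> n0\<close> by (simp add: prefix_Suc)
      finally show "\<tau> (Suc m) = rr E (prefix \<tau> m) (\<tau> m)" .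
    qed
    then show ?thesis by (rule rr_fair_tail[OF arena Vi])
  qed
  then show ?thesis using st unfolding fair_strategies_def by blast
qed

lemma play_hist_eq: "play_hist Vex s t v n = prefix (play Vex v s t) (Suc n)"
proof (induction n)
  case 0
  then show ?case by (simp add: prefix_def play_def)
next
  case (Suc n)
  have "play_hist Vex s t v (Suc n) = play_hist Vex s t v n @ [last (play_hist Vex s t v (Suc n))]"
    by (simp add: Let_def)
  also have "\<dots> = prefix (play Vex v s t) (Suc n) @ [play Vex v s t (Suc n)]"
    using Suc unfolding play_def[of Vex v s t "Suc n"] by simp
  finally show ?case by (simp add: prefix_Suc[of _ "Suc n"])
qed

lemma play_0: "play Vex v s t 0 = v"
  by (simp add: play_def)

lemma play_Suc: "play Vex v s t (Suc n) =
   (if play Vex v s t n \<in> Vex then s (prefix (play Vex v s t) n) (play Vex v s t n)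
    else t (prefix (play Vex v s t) n) (play Vex v s t n))"
proof -
  have h: "play_hist Vex s t v n = prefix (play Vex v s t) n @ [play Vex v s t n]"
    by (simp add: play_hist_eq prefix_Suc)
  show ?thesis
    by (simp add: play_def[of _ _ _ _ "Suc n"] Let_def h)
qed

lemma play_unique:
  assumes "\<tau> 0 = v"
    and "\<forall>n. \<tau> n \<in> Vex \<longrightarrow> \<tau> (Suc n) = s (prefix \<tau> n) (\<tau> n)"
    and "\<forall>n. \<tau> n \<notin> Vex \<longrightarrow> \<tau> (Suc n) = t (prefix \<tau> n) (\<tau> n)"
  shows "\<tau> = play Vex v s t"
proof -
  have "\<forall>j\<le>n. \<tau> j = play Vex v s t j" for n
  proof (induction n)
    case 0 then show ?case by (simp add: assms(1) play_0)
  next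
    case (Suc n)
    have pe: "prefix \<tau> n = prefix (play Vex v s t) n"
      using Suc by (intro prefix_cong) auto
    have "\<tau> (Suc n) = play Vex v s t (Suc n)"
      using assms(2,3) Suc pe by (simp add: play_Suc)
    then show ?case using Suc le_Suc_eq by auto
  qed
  then show ?thesis by auto
qed

lemma play_props:
  assumes arena: "fair_arena Vex Vall E Ef" and v: "v \<in> Vex \<union> Vall"
    and s: "s \<in> strategies Vex E" and t: "t \<in> strategies Vall E"
  shows "play Vex v s t n \<in> Vex \<union> Vall \<and> (play Vex v s t n, play Vex v s t (Suc n)) \<in> E"
proof (induction n)
  case 0
  have "(play Vex v s t 0, play Vex v s t (Suc 0)) \<in> E"
    using v s t by (auto simp: play_Suc play_0 strategies_def)
  then show ?case using v play_0 by metis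
next
  case (Suc n)
  have inV: "play Vex v s t (Suc n) \<in> Vex \<union> Vall"
    using Suc arena unfolding fair_arena_def by auto
  then have "(play Vex v s t (Suc n), play Vex v s t (Suc (Suc n))) \<in> E"
    using s t by (subst play_Suc[of _ _ _ _ "Suc n"]) (auto simp: strategies_def)
  then show ?case using inV by simp
qed

lemma play_complies_ex: "complies Vex s (play Vex v s t)"
  unfolding complies_def by (simp add: play_Suc)

lemma play_complies_all:
  assumes "fair_arena Vex Vall E Ef"
  shows "complies Vall t (play Vex v s t)"
  using assms unfolding complies_def fair_arena_def by (auto simp: play_Suc)

theorem lemma2:
  fixes Vex Vall :: "'v set" and E Ef :: "('v \<times> 'v) set"
    and \<alpha> :: "(nat \<Rightarrow> 'v) set" and v :: 'v
  assumes "fair_arena Vex Vall E Ef"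
    and "omega_regular \<alpha>"
    and "\<alpha> \<subseteq> {w. \<forall>n. w n \<in> Vex \<union> Vall}"
    and "v \<in> Vex \<union> Vall"
  shows "(\<exists>s \<in> fair_strategies (Vex \<union> Vall) Vex E Ef.
            \<forall>t \<in> fair_strategies (Vex \<union> Vall) Vall E Ef. play Vex v s t \<in> \<alpha>)
     \<longleftrightarrow>
         (\<exists>s \<in> strategies Vex E. \<forall>t \<in> strategies Vall E.
            fair Vex Ef (play Vex v s t) \<and>
            (fair Vall Ef (play Vex v s t) \<longrightarrow> play Vex v s t \<in> \<alpha>))"
proof -
  note arena = assms(1)
  have disj: "Vex \<inter> Vall = {}" using arena unfolding fair_arena_def by auto
  show ?thesis
  proof
    assume "\<exists>s \<in> fair_strategies (Vex \<union> Vall) Vex E Ef.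
            \<forall>t \<in> fair_strategies (Vex \<union> Vall) Vall E Ef. play Vex v s t \<in> \<alpha>"
    then obtain s where sf: "s \<in> fair_strategies (Vex \<union> Vall) Vex E Ef"
      and win: "\<forall>t \<in> fair_strategies (Vex \<union> Vall) Vall E Ef. play Vex v s t \<in> \<alpha>" by blast
    have s: "s \<in> strategies Vex E" using sf unfolding fair_strategies_def by blast
    show "\<exists>s \<in> strategies Vex E. \<forall>t \<in> strategies Vall E.
            fair Vex Ef (play Vex v s t) \<and>
            (fair Vall Ef (play Vex v s t) \<longrightarrow> play Vex v s t \<in> \<alpha>)"
    proof (intro bexI[OF _ s] ballI conjI impI)
      fix t assume t: "t \<in> strategies Vall E"
      define \<rho> where "\<rho> = play Vex v s t"
      have pl: "is_play E \<rho>" using play_props[OF arena assms(4) s t]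
        unfolding is_play_def \<rho>_def by blast
      have r0: "\<rho> 0 = v" unfolding \<rho>_def by (simp add: play_0)
      have sfa: "\<forall>\<tau>. is_play E \<tau> \<and> \<tau> 0 \<in> Vex \<union> Vall \<and> complies Vex s \<tau> \<longrightarrow> fair Vex Ef \<tau>"
        using sf unfolding fair_strategies_def by blast
      have "\<rho> 0 \<in> Vex \<union> Vall" using r0 assms(4) by simp
      moreover have "complies Vex s \<rho>" unfolding \<rho>_def by (rule play_complies_ex)
      ultimately have "fair Vex Ef \<rho>" using sfa pl by blast
      then show "fair Vex Ef (play Vex v s t)" unfolding \<rho>_def .
      assume fa: "fair Vall Ef (play Vex v s t)"
      define t' where "t' = patch (range (prefix \<rho>)) t E"
      have "t' \<in> fair_strategies (Vex \<union> Vall) Vall E Ef"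
        unfolding t'_def
      proof (rule patch_fair[OF arena _ t])
        show "Vall \<subseteq> Vex \<union> Vall" by blast
        show "\<forall>w u. w @ [u] \<in> range (prefix \<rho>) \<longrightarrow> w \<in> range (prefix \<rho>)"
        proof (intro allI impI)
          fix w u assume "w @ [u] \<in> range (prefix \<rho>)"
          then obtain m where m: "w @ [u] = prefix \<rho> m" by blast
          then obtain k where "m = Suc k" by (cases m) (auto simp: prefix_def)
          then have "w = prefix \<rho> k" using m by (simp add: prefix_Suc)
          then show "w \<in> range (prefix \<rho>)" by blast
        qed
        show "\<forall>\<tau>. is_play E \<tau> \<and> \<tau> 0 \<in> Vex \<union> Vall \<and> complies Vall (patch (range (prefix \<rho>)) t E) \<tau>
                  \<and> (\<forall>n. prefix \<tau> n \<in> range (prefix \<rho>)) \<longrightarrow> fair Vall Ef \<tau>"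
        proof (intro allI impI)
          fix \<tau> assume h: "is_play E \<tau> \<and> \<tau> 0 \<in> Vex \<union> Vall \<and> complies Vall (patch (range (prefix \<rho>)) t E) \<tau>
                  \<and> (\<forall>n. prefix \<tau> n \<in> range (prefix \<rho>))"
          have "\<tau> n = \<rho> n" for n
          proof -
            obtain m where "prefix \<tau> (Suc n) = prefix \<rho> m" using h by blast
            moreover then have "m = Suc n" by (metis prefix_len)
            ultimately show ?thesis using prefix_eqD by blast
          qed
          then have "\<tau> = \<rho>" by auto
          then show "fair Vall Ef \<tau>" using fa \<rho>_def by simp
        qed
      qed
      then have "play Vex v s t' \<in> \<alpha>" using win by blast
      moreover have "\<rho> = play Vex v s t'"
      proof (rule play_unique)
        show "\<rho> 0 = v" by (rule r0)
        show "\<forall>n. \<rho> n \<in> Vex \<longrightarrow> \<rho> (Suc n) = s (prefix \<rho> n) (\<rho> n)"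
          unfolding \<rho>_def by (simp add: play_Suc)
        show "\<forall>n. \<rho> n \<notin> Vex \<longrightarrow> \<rho> (Suc n) = t' (prefix \<rho> n) (\<rho> n)"
        proof (intro allI impI)
          fix n assume "\<rho> n \<notin> Vex"
          moreover have "prefix \<rho> n @ [\<rho> n] \<in> range (prefix \<rho>)"
            by (metis prefix_Suc rangeI)
          ultimately show "\<rho> (Suc n) = t' (prefix \<rho> n) (\<rho> n)"
            unfolding t'_def patch_def \<rho>_def by (simp add: play_Suc)
        qed
      qed
      ultimately show "play Vex v s t \<in> \<alpha>" using \<rho>_def by simp
    qed
  next
    assume "\<exists>s \<in> strategies Vex E. \<forall>t \<in> strategies Vall E.
            fair Vex Ef (play Vex v s t) \<and>
            (fair Vall Ef (play Vex v s t) \<longrightarrow> play Vex v s t \<in> \<alpha>)"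
    then obtain s where s: "s \<in> strategies Vex E" and
      good: "\<forall>t \<in> strategies Vall E. fair Vex Ef (play Vex v s t) \<and>
            (fair Vall Ef (play Vex v s t) \<longrightarrow> play Vex v s t \<in> \<alpha>)" by blast
    define P where "P = {w. \<exists>\<sigma> n. \<sigma> 0 = v \<and> complies Vex s \<sigma> \<and> w = prefix \<sigma> n}"
    define s' where "s' = patch P s E"
    have s'f: "s' \<in> fair_strategies (Vex \<union> Vall) Vex E Ef"
      unfolding s'_def
    proof (rule patch_fair[OF arena _ s])
      show "Vex \<subseteq> Vex \<union> Vall" by blast
      show "\<forall>w u. w @ [u] \<in> P \<longrightarrow> w \<in> P"
      proof (intro allI impI)
        fix w u assume "w @ [u] \<in> P"
        then obtain \<sigma> m where m: "\<sigma> 0 = v" "complies Vex s \<sigma>" "w @ [u] = prefix \<sigma> m"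
          unfolding P_def by blast
        then obtain k where "m = Suc k" by (cases m) (auto simp: prefix_def)
        then have "w = prefix \<sigma> k" using m by (simp add: prefix_Suc)
        then show "w \<in> P" using m unfolding P_def by blast
      qed
      show "\<forall>\<tau>. is_play E \<tau> \<and> \<tau> 0 \<in> Vex \<union> Vall \<and> complies Vex (patch P s E) \<tau>
                  \<and> (\<forall>n. prefix \<tau> n \<in> P) \<longrightarrow> fair Vex Ef \<tau>"
      proof (intro allI impI)
        fix \<tau> assume h: "is_play E \<tau> \<and> \<tau> 0 \<in> Vex \<union> Vall \<and> complies Vex (patch P s E) \<tau>
                  \<and> (\<forall>n. prefix \<tau> n \<in> P)"
        have t0: "\<tau> 0 = v"
        proof -
          obtain \<sigma> m where m: "\<sigma> 0 = v" "prefix \<tau> 1 = prefix \<sigma> m"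
            using h unfolding P_def by blast
          then have "m = 1" by (metis prefix_len)
          then show ?thesis using m prefix_eqD by fastforce
        qed
        have tc: "\<forall>n. \<tau> n \<in> Vex \<longrightarrow> \<tau> (Suc n) = s (prefix \<tau> n) (\<tau> n)"
        proof (intro allI impI)
          fix n assume tn: "\<tau> n \<in> Vex"
          obtain \<sigma> m where m: "complies Vex s \<sigma>" "prefix \<tau> (Suc (Suc n)) = prefix \<sigma> m"
            using h unfolding P_def by blast
          then have "m = Suc (Suc n)" by (metis prefix_len)
          then have eq: "j < Suc (Suc n) \<Longrightarrow> \<tau> j = \<sigma> j" for j using m prefix_eqD by blast
          have pe: "prefix \<tau> n = prefix \<sigma> n" by (rule prefix_cong) (simp add: eq)
          show "\<tau> (Suc n) = s (prefix \<tau> n) (\<tau> n)"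
            using m(1) tn eq[of n] eq[of "Suc n"] pe unfolding complies_def by simp
        qed
        define tt where "tt w u = (if w @ [u] = prefix \<tau> (Suc (length w))
           then \<tau> (Suc (length w)) else (SOME u'. (u, u') \<in> E))" for w u
        have tt: "tt \<in> strategies Vall E"
          unfolding strategies_def
        proof (intro CollectI allI impI)
          fix w u assume u: "u \<in> Vall"
          show "(u, tt w u) \<in> E"
          proof (cases "w @ [u] = prefix \<tau> (Suc (length w))")
            case True
            then have "u = \<tau> (length w)" by (simp add: prefix_Suc)
            then show ?thesis using True h unfolding tt_def is_play_def by simp
          next
            case False
            have ex: "\<exists>u'. (u, u') \<in> E" using u arena unfolding fair_arena_def by auto
            show ?thesis using False someI_ex[OF ex] unfolding tt_def by simp
          qed
        qed
        have "\<tau> = play Vex v s tt"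
        proof (rule play_unique)
          show "\<tau> 0 = v" by (rule t0)
          show "\<forall>n. \<tau> n \<in> Vex \<longrightarrow> \<tau> (Suc n) = s (prefix \<tau> n) (\<tau> n)" by (rule tc)
          show "\<forall>n. \<tau> n \<notin> Vex \<longrightarrow> \<tau> (Suc n) = tt (prefix \<tau> n) (\<tau> n)"
            unfolding tt_def by (simp add: prefix_Suc)
        qed
        then show "fair Vex Ef \<tau>" using good tt by simp
      qed
    qed
    show "\<exists>s \<in> fair_strategies (Vex \<union> Vall) Vex E Ef.
            \<forall>t \<in> fair_strategies (Vex \<union> Vall) Vall E Ef. play Vex v s t \<in> \<alpha>"
    proof (intro bexI[OF _ s'f] ballI)
      fix t assume tf: "t \<in> fair_strategies (Vex \<union> Vall) Vall E Ef"
      have t: "t \<in> strategies Vall E" using tf unfolding fair_strategies_def by blast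
      define \<pi> where "\<pi> = play Vex v s t"
      have p0: "\<pi> 0 = v" unfolding \<pi>_def by (simp add: play_0)
      have pc: "complies Vex s \<pi>" unfolding \<pi>_def by (rule play_complies_ex)
      have "\<pi> = play Vex v s' t"
      proof (rule play_unique)
        show "\<pi> 0 = v" by (rule p0)
        show "\<forall>n. \<pi> n \<in> Vex \<longrightarrow> \<pi> (Suc n) = s' (prefix \<pi> n) (\<pi> n)"
        proof (intro allI impI)
          fix n assume "\<pi> n \<in> Vex"
          moreover have "prefix \<pi> n @ [\<pi> n] \<in> P"
            unfolding P_def using p0 pc by (metis (mono_tags, lifting) mem_Collect_eq prefix_Suc)
          ultimately show "\<pi> (Suc n) = s' (prefix \<pi> n) (\<pi> n)"
            unfolding s'_def patch_def \<pi>_def by (simp add: play_Suc)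
        qed
        show "\<forall>n. \<pi> n \<notin> Vex \<longrightarrow> \<pi> (Suc n) = t (prefix \<pi> n) (\<pi> n)"
          unfolding \<pi>_def by (simp add: play_Suc)
      qed
      moreover have "fair Vall Ef \<pi>"
      proof -
        have "is_play E \<pi>" using play_props[OF arena assms(4) s t]
          unfolding is_play_def \<pi>_def by blast
        moreover have "complies Vall t \<pi>" unfolding \<pi>_def by (rule play_complies_all[OF arena])
        ultimately show ?thesis using tf p0 assms(4) unfolding fair_strategies_def by blast
      qed
      ultimately show "play Vex v s' t \<in> \<alpha>" using good t \<pi>_def by metis
    qed
  qed
qed

end
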